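(* Let $\{\varphi_n\}_{n\ge1}$ be an orthonormal system on $[0,1]$ and let $\{d_n\}$ be a sequence of real numbers with $d_n=O\!\left(\frac{\sqrt{n}}{\log^2(n+1)}\right)$. For $a=\{a_n\}\in\ell_2$ put $Q_n(d,a,x)=\sum_{k=1}^{n} d_k a_k \log k\,\varphi_k(x)$ and $B_n(d,a)=\max_{1\le i<n}\left|\int_0^{i/n}Q_n(d,a,x)\,dx\right|$. Suppose that for every $a\in\ell_2$, $B_n(d,a)=O(1)$ as $n\to\infty$. Then for every $f\in BV$ the series $$\sum_{k=1}^{\infty} d_k\, C_k(f)\,\varphi_k(x)$$ converges almost everywhere on $[0,1]$, where $C_k(f)=\int_0^1 f(x)\varphi_k(x)\,dx$.
   Context: $BV$ denotes the class of (finite-valued) functions of bounded variation on $[0,1]$. An orthonormal system on $[0,1]$ is a sequence of functions orthonormal in $L_2(0,1)$. $\log$ denotes the logarithm (so $\log 1=0$). *)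

theory Defs
  imports "HOL-Analysis.Analysis"
begin

definition BV01 :: "(real \<Rightarrow> real) \<Rightarrow> bool" where
  "BV01 f \<longleftrightarrow> (\<exists>M. \<forall>(t::nat \<Rightarrow> real) m. t 0 = 0 \<and> t m = 1 \<and> (\<forall>i<m. t i \<le> t (Suc i))
      \<longrightarrow> (\<Sum>i<m. \<bar>f (t (Suc i)) - f (t i)\<bar>) \<le> M)"

definition orthonormal_system :: "(nat \<Rightarrow> real \<Rightarrow> real) \<Rightarrow> bool" where
  "orthonormal_system \<phi> \<longleftrightarrow>
     (\<forall>n\<ge>1. \<phi> n \<in> borel_measurable lborel \<and>
             set_integrable lborel {0..1} (\<lambda>x. (\<phi> n x)\<^sup>2)) \<and>
     (\<forall>n\<ge>1. \<forall>m\<ge>1. (LBINT x:{0..1}. \<phi> n x * \<phi> m x) = (if n = m then 1 else 0))"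

definition coef :: "(nat \<Rightarrow> real \<Rightarrow> real) \<Rightarrow> (real \<Rightarrow> real) \<Rightarrow> nat \<Rightarrow> real" where
  "coef \<phi> f k = (LBINT x:{0..1}. f x * \<phi> k x)"

definition Qn :: "(nat \<Rightarrow> real \<Rightarrow> real) \<Rightarrow> nat \<Rightarrow> (nat \<Rightarrow> real) \<Rightarrow> (nat \<Rightarrow> real) \<Rightarrow> real \<Rightarrow> real" where
  "Qn \<phi> n d a x = (\<Sum>k=1..n. d k * a k * ln (real k) * \<phi> k x)"

definition Bn :: "(nat \<Rightarrow> real \<Rightarrow> real) \<Rightarrow> nat \<Rightarrow> (nat \<Rightarrow> real) \<Rightarrow> (nat \<Rightarrow> real) \<Rightarrow> real" where
  "Bn \<phi> n d a = Max ((\<lambda>i. \<bar>LBINT x:{0..real i / real n}. Qn \<phi> n d a x\<bar>) ` {1..<n})"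

end

theory Submission
  imports Defs "HOL-Analysis.Analysis"
begin

definition partn :: "real \<Rightarrow> (nat \<Rightarrow> real) \<Rightarrow> nat \<Rightarrow> bool" where
  "partn x t m \<longleftrightarrow> t 0 = 0 \<and> t m = x \<and> (\<forall>i<m. t i \<le> t (Suc i))"

definition vsum :: "(real \<Rightarrow> real) \<Rightarrow> (nat \<Rightarrow> real) \<Rightarrow> nat \<Rightarrow> real" where
  "vsum f t m = (\<Sum>i<m. \<bar>f (t (Suc i)) - f (t i)\<bar>)"

definition Vf :: "(real \<Rightarrow> real) \<Rightarrow> real \<Rightarrow> real" where
  "Vf f x = Sup {vsum f t m | t m. partn x t m}"

lemma partn_extend:
  assumes "partn x t m" "x \<le> y"
  shows "partn y (t(Suc m := y)) (Suc m)"
    and "vsum f (t(Suc m := y)) (Suc m) = vsum f t m + \<bar>f y - f x\<bar>"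
proof -
  show "partn y (t(Suc m := y)) (Suc m)"
    using assms unfolding partn_def by (auto simp: less_Suc_eq)
  have "vsum f (t(Suc m := y)) (Suc m) = (\<Sum>i<m. \<bar>f (t (Suc i)) - f (t i)\<bar>) + \<bar>f y - f (t m)\<bar>"
    unfolding vsum_def by simp
  then show "vsum f (t(Suc m := y)) (Suc m) = vsum f t m + \<bar>f y - f x\<bar>"
    using assms unfolding partn_def vsum_def by simp
qed

lemma BV_bound:
  assumes "BV01 f"
  obtains Mv where "\<And>x t m. x \<le> 1 \<Longrightarrow> partn x t m \<Longrightarrow> vsum f t m \<le> Mv"
proof -
  from assms obtain Mv where Mv: "\<And>t m. t 0 = 0 \<Longrightarrow> t m = 1 \<Longrightarrow> (\<forall>i<m. t i \<le> t (Suc i)) \<Longrightarrow> (\<Sum>i<m. \<bar>f (t (Suc i)) - f (t i)\<bar>) \<le> Mv"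
    unfolding BV01_def by blast
  have "vsum f t m \<le> Mv" if "x \<le> 1" "partn x t m" for x t m
  proof -
    have "partn 1 (t(Suc m := 1)) (Suc m)" "vsum f (t(Suc m := 1)) (Suc m) = vsum f t m + \<bar>f 1 - f x\<bar>"
      using partn_extend[OF that(2) that(1)] by auto
    moreover have "vsum f (t(Suc m := 1)) (Suc m) \<le> Mv"
      using calculation(1) Mv unfolding partn_def vsum_def by blast
    ultimately show ?thesis by linarith
  qed
  then show ?thesis using that by blast
qed

locale bvf =
  fixes f :: "real \<Rightarrow> real" and Mv :: real
  assumes bnd: "\<And>x t m. x \<le> 1 \<Longrightarrow> partn x t m \<Longrightarrow> vsum f t m \<le> Mv"
begin

lemma set_ne: "0 \<le> x \<Longrightarrow> {vsum f t m | t m. partn x t m} \<noteq> {}"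
proof -
  assume x: "0 \<le> x"
  have "partn x (\<lambda>i. if i = 0 then 0 else x) 1" using x unfolding partn_def by auto
  then show ?thesis by blast
qed

lemma set_bdd: "x \<le> 1 \<Longrightarrow> bdd_above {vsum f t m | t m. partn x t m}"
  using bnd unfolding bdd_above_def by blast

lemma V_ge: "x \<le> 1 \<Longrightarrow> partn x t m \<Longrightarrow> vsum f t m \<le> Vf f x"
  unfolding Vf_def by (rule cSup_upper) (use set_bdd in auto)

lemma V_le: "0 \<le> x \<Longrightarrow> x \<le> 1 \<Longrightarrow> Vf f x \<le> Mv"
  unfolding Vf_def by (rule cSup_least) (use set_ne bnd in auto)

lemma V0: "0 \<le> Vf f 0"
proof -
  have "partn 0 (\<lambda>i. 0) 0" unfolding partn_def by auto
  then have "vsum f (\<lambda>i. 0) 0 \<le> Vf f 0" by (intro V_ge) auto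
  then show ?thesis by (simp add: vsum_def)
qed

lemma V_step:
  assumes "0 \<le> x" "x \<le> y" "y \<le> 1"
  shows "Vf f x + \<bar>f y - f x\<bar> \<le> Vf f y"
proof -
  have "Vf f x \<le> Vf f y - \<bar>f y - f x\<bar>"
    unfolding Vf_def[of f x]
  proof (rule cSup_least)
    show "{vsum f t m | t m. partn x t m} \<noteq> {}" using set_ne assms by auto
    fix z assume "z \<in> {vsum f t m | t m. partn x t m}"
    then obtain t m where z: "z = vsum f t m" and p: "partn x t m" by auto
    have "vsum f (t(Suc m := y)) (Suc m) \<le> Vf f y"
      using partn_extend[OF p assms(2)] assms by (intro V_ge) auto
    then show "z \<le> Vf f y - \<bar>f y - f x\<bar>"
      using partn_extend(2)[OF p assms(2), of f] z by linarith
  qed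
  then show ?thesis by linarith
qed

lemma V_mono: "0 \<le> x \<Longrightarrow> x \<le> y \<Longrightarrow> y \<le> 1 \<Longrightarrow> Vf f x \<le> Vf f y"
  using V_step[of x y] by linarith

lemma f_bounded: "0 \<le> x \<Longrightarrow> x \<le> 1 \<Longrightarrow> \<bar>f x\<bar> \<le> \<bar>f 0\<bar> + Mv"
  using V_step[of 0 x] V0 V_le[of x] by linarith

lemma f_meas: "(\<lambda>x. indicator {0..1} x * f x) \<in> borel_measurable lborel"
proof -
  have m1: "mono_on {0..1} (Vf f)" by (auto intro!: mono_onI V_mono)
  have m2: "mono_on {0..1} (\<lambda>x. Vf f x - f x)"
  proof (rule mono_onI)
    fix x y :: real assume "x \<in> {0..1}" "y \<in> {0..1}" "x \<le> y"
    then have "Vf f x + \<bar>f y - f x\<bar> \<le> Vf f y" by (intro V_step) auto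
    then show "Vf f x - f x \<le> Vf f y - f y" by linarith
  qed
  have "(\<lambda>x. Vf f x - (Vf f x - f x)) \<in> borel_measurable (restrict_space borel {0..1})"
    using borel_measurable_mono_on_fnc[OF m1] borel_measurable_mono_on_fnc[OF m2] by measurable
  then have "f \<in> borel_measurable (restrict_space borel {0..1})" by simp
  then have "(\<lambda>x. indicator {0..1} x *\<^sub>R f x) \<in> borel_measurable borel"
    by (subst (asm) borel_measurable_restrict_space_iff) auto
  then show ?thesis by simp
qed

end




lemma amgm: fixes q d :: real assumes q: "q > 0" shows "\<bar>d\<bar> \<le> (1 / q + q * d\<^sup>2) / 2"
proof -
  have "0 \<le> (1 - q * \<bar>d\<bar>)\<^sup>2" by simp
  then have "q * (\<bar>d\<bar> * 2) \<le> 1 + d\<^sup>2 * q\<^sup>2"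
    by (simp add: power2_diff power_mult_distrib power2_abs algebra_simps)
  then show ?thesis using q by (simp add: field_simps power2_eq_square)
qed

lemma conv_from_blocks:
  fixes P :: "nat \<Rightarrow> real" and D :: "nat \<Rightarrow> real"
  assumes sa: "summable (\<lambda>m. (real m + 1)\<^sup>2 * (P (2^Suc m) - P (2^m))\<^sup>2)"
    and sb: "summable (\<lambda>m. (D m)\<^sup>2)"
    and bd: "\<And>m n. 2^m \<le> n \<Longrightarrow> n \<le> 2^Suc m \<Longrightarrow> \<bar>P n - P (2^m)\<bar> \<le> D m"
  shows "convergent P"
proof -
  define \<Delta> where "\<Delta> m = P (2^Suc m) - P (2^m)" for m
  have absb: "\<bar>\<Delta> m\<bar> \<le> (1 / (real m + 1)\<^sup>2 + (real m + 1)\<^sup>2 * (\<Delta> m)\<^sup>2) / 2" for m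
    by (rule amgm) auto
  have s1: "summable (\<lambda>m. 1 / (real m + 1)\<^sup>2)"
    using summable_Suc_iff[of "\<lambda>m. 1 / (real m)\<^sup>2"] inverse_power_summable[of 2, where 'a=real]
    by (simp add: field_simps power_one_over del: inverse_power_summable)
  have "summable (\<lambda>m. (1 / (real m + 1)\<^sup>2 + (real m + 1)\<^sup>2 * (\<Delta> m)\<^sup>2) / 2)"
    using s1 sa unfolding \<Delta>_def by (intro summable_divide summable_add)
  then have "summable (\<lambda>m. \<bar>\<Delta> m\<bar>)"
    by (rule summable_comparison_test'[where N=0]) (use absb in auto)
  then have "summable \<Delta>" by (rule summable_rabs_cancel)
  then have "convergent (\<lambda>m. \<Sum>i<m. \<Delta> i)" by (simp add: summable_iff_convergent)
  moreover have "(\<Sum>i<m. \<Delta> i) = P (2^m) - P 1" for m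
    unfolding \<Delta>_def by (induction m) auto
  ultimately have "convergent (\<lambda>m. P (2^m) - P 1)" by simp
  then have "convergent (\<lambda>m. P (2^m) - P 1 + P 1)" by (intro convergent_add convergent_const)
  then obtain L where L: "(\<lambda>m. P (2^m)) \<longlonglongrightarrow> L" by (auto simp: convergent_def)
  have "(\<lambda>m. (D m)\<^sup>2) \<longlonglongrightarrow> 0" using sb by (rule summable_LIMSEQ_zero)
  then have "(\<lambda>m. sqrt ((D m)\<^sup>2)) \<longlonglongrightarrow> sqrt 0" by (intro tendsto_intros)
  then have D0: "(\<lambda>m. \<bar>D m\<bar>) \<longlonglongrightarrow> 0" by simp
  have "P \<longlonglongrightarrow> L"
  proof (rule LIMSEQ_I)
    fix r :: real assume r: "0 < r"
    from LIMSEQ_D[OF L, of "r/2"] r obtain M1 where M1: "\<And>m. m \<ge> M1 \<Longrightarrow> norm (P (2^m) - L) < r/2" by auto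
    from LIMSEQ_D[OF D0, of "r/2"] r obtain M2 where M2: "\<And>m. m \<ge> M2 \<Longrightarrow> norm (\<bar>D m\<bar> - 0) < r/2" by auto
    show "\<exists>no. \<forall>n\<ge>no. norm (P n - L) < r"
    proof (intro exI allI impI)
      fix n :: nat assume n: "n \<ge> 2^(M1 + M2)"
      then have "n \<ge> 1" using one_le_power[of "2::nat" "M1+M2"] by linarith
      then obtain m where m: "2^m \<le> n" "n < 2^(m+1)" using ex_power_ivl1[of 2 n] by auto
      have "(2::nat)^(M1+M2) < 2^(m+1)" using n m by linarith
      then have "M1 + M2 < m + 1" using power_strict_increasing_iff[of "2::nat" "M1+M2" "m+1"] by simp
      then have "m \<ge> M1" "m \<ge> M2" by auto
      have "\<bar>P n - P (2^m)\<bar> \<le> D m" using m by (intro bd) auto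
      moreover have "\<bar>P n - L\<bar> \<le> \<bar>P n - P (2^m)\<bar> + \<bar>P (2^m) - L\<bar>"
        using abs_triangle_ineq[of "P n - P (2^m)" "P (2^m) - L"] by simp
      moreover have "D m \<le> \<bar>D m\<bar>" by simp
      ultimately show "norm (P n - L) < r" using M1[OF \<open>m \<ge> M1\<close>] M2[OF \<open>m \<ge> M2\<close>] by simp
    qed
  qed
  then show ?thesis by (auto simp: convergent_def)
qed


locale ons_abs =
  fixes M :: "'a measure" and \<psi> :: "nat \<Rightarrow> 'a \<Rightarrow> real"
  assumes meas[measurable]: "\<And>k. \<psi> k \<in> borel_measurable M"
    and sqi: "\<And>k. integrable M (\<lambda>x. (\<psi> k x)\<^sup>2)"
    and orth: "\<And>k l. integral\<^sup>L M (\<lambda>x. \<psi> k x * \<psi> l x) = (if k = l then 1 else 0)"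
begin

lemma prod_int: "integrable M (\<lambda>x. \<psi> k x * \<psi> l x)"
proof (rule Bochner_Integration.integrable_bound[of _ "\<lambda>x. (\<psi> k x)\<^sup>2 + (\<psi> l x)\<^sup>2"])
  show "integrable M (\<lambda>x. (\<psi> k x)\<^sup>2 + (\<psi> l x)\<^sup>2)" using sqi by auto
  show "AE x in M. norm (\<psi> k x * \<psi> l x) \<le> norm ((\<psi> k x)\<^sup>2 + (\<psi> l x)\<^sup>2)"
  proof (intro AE_I2)
    fix x
    have "2 * \<bar>\<psi> k x\<bar> * \<bar>\<psi> l x\<bar> \<le> (\<psi> k x)\<^sup>2 + (\<psi> l x)\<^sup>2"
    proof -
      have "0 \<le> (\<bar>\<psi> k x\<bar> - \<bar>\<psi> l x\<bar>)\<^sup>2" by simp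
      then show ?thesis by (simp add: power2_diff power2_abs)
    qed
    moreover have "0 \<le> \<bar>\<psi> k x\<bar> * \<bar>\<psi> l x\<bar>" by simp
    ultimately have "\<bar>\<psi> k x * \<psi> l x\<bar> \<le> (\<psi> k x)\<^sup>2 + (\<psi> l x)\<^sup>2" unfolding abs_mult by linarith
    moreover have "0 \<le> (\<psi> k x)\<^sup>2 + (\<psi> l x)\<^sup>2" by simp
    ultimately show "norm (\<psi> k x * \<psi> l x) \<le> norm ((\<psi> k x)\<^sup>2 + (\<psi> l x)\<^sup>2)"
      by simp
  qed
qed measurable

lemma sq_sum_int:
  assumes "finite K"
  shows "integrable M (\<lambda>x. (\<Sum>k\<in>K. c k * \<psi> k x)\<^sup>2)"
    and "integral\<^sup>L M (\<lambda>x. (\<Sum>k\<in>K. c k * \<psi> k x)\<^sup>2) = (\<Sum>k\<in>K. (c k)\<^sup>2)"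
proof -
  have eq: "(\<lambda>x. (\<Sum>k\<in>K. c k * \<psi> k x)\<^sup>2) = (\<lambda>x. \<Sum>k\<in>K. \<Sum>l\<in>K. (c k * c l) * (\<psi> k x * \<psi> l x))"
    by (auto simp: power2_eq_square sum_product intro!: sum.cong ext)
  show "integrable M (\<lambda>x. (\<Sum>k\<in>K. c k * \<psi> k x)\<^sup>2)"
    unfolding eq using prod_int by auto
  have "integral\<^sup>L M (\<lambda>x. (\<Sum>k\<in>K. c k * \<psi> k x)\<^sup>2) = (\<Sum>k\<in>K. \<Sum>l\<in>K. (c k * c l) * (if k = l then 1 else 0))"
    unfolding eq using prod_int by (simp add: orth)
  also have "\<dots> = (\<Sum>k\<in>K. (c k)\<^sup>2)"
    using assms by (simp add: power2_eq_square if_distrib cong: if_cong)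
  finally show "integral\<^sup>L M (\<lambda>x. (\<Sum>k\<in>K. c k * \<psi> k x)\<^sup>2) = (\<Sum>k\<in>K. (c k)\<^sup>2)" .
qed

lemma sq_sum_nn:
  assumes "finite K"
  shows "(\<integral>\<^sup>+x. ennreal ((\<Sum>k\<in>K. c k * \<psi> k x)\<^sup>2) \<partial>M) = ennreal (\<Sum>k\<in>K. (c k)\<^sup>2)"
  using sq_sum_int[OF assms, of c] by (subst nn_integral_eq_integral) auto

definition S :: "(nat \<Rightarrow> real) \<Rightarrow> nat \<Rightarrow> nat \<Rightarrow> 'a \<Rightarrow> real" where
  "S c s j x = (\<Sum>k\<in>{s..<s+j}. c k * \<psi> k x)"

definition Rmax :: "(nat \<Rightarrow> real) \<Rightarrow> nat \<Rightarrow> nat \<Rightarrow> 'a \<Rightarrow> real" where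
  "Rmax c m s x = Max ((\<lambda>j. \<bar>S c s j x\<bar>) ` {..(2::nat)^m})"

lemma S_meas[measurable]: "S c s j \<in> borel_measurable M"
  unfolding S_def by measurable

lemma Rmax_meas[measurable]: "Rmax c m s \<in> borel_measurable M"
  unfolding Rmax_def by (intro borel_measurable_Max) auto

lemma Rmax_ge: "j \<le> 2^m \<Longrightarrow> \<bar>S c s j x\<bar> \<le> Rmax c m s x"
  unfolding Rmax_def by (intro Max_ge) auto

lemma Rmax_nonneg: "0 \<le> Rmax c m s x"
  using Rmax_ge[of 0 m c s x] by simp

lemma Rmax_step: "Rmax c (Suc m) s x \<le> max (Rmax c m s x) (\<bar>S c s (2^m) x\<bar> + Rmax c m (s + 2^m) x)"
proof -
  have "\<bar>S c s j x\<bar> \<le> max (Rmax c m s x) (\<bar>S c s (2^m) x\<bar> + Rmax c m (s + 2^m) x)"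
    if j: "j \<le> 2^Suc m" for j
  proof (cases "j \<le> 2^m")
    case True then show ?thesis using Rmax_ge[OF True, of c s x] by (meson max.coboundedI1)
  next
    case False
    then have "S c s j x = S c s (2^m) x + S c (s + 2^m) (j - 2^m) x"
      unfolding S_def by (subst sum.atLeastLessThan_concat[symmetric, of s "s+2^m"]) auto
    moreover have "\<bar>S c (s + 2^m) (j - 2^m) x\<bar> \<le> Rmax c m (s + 2^m) x"
      using j by (intro Rmax_ge) auto
    ultimately have "\<bar>S c s j x\<bar> \<le> \<bar>S c s (2^m) x\<bar> + Rmax c m (s + 2^m) x"
      using abs_triangle_ineq[of "S c s (2^m) x" "S c (s + 2^m) (j - 2^m) x"] by linarith
    then show ?thesis by (rule max.coboundedI2)
  qed
  then show ?thesis unfolding Rmax_def[of c "Suc m"] by (intro Max.boundedI) auto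
qed

lemma young: "(u + v)\<^sup>2 \<le> (1 + t) * u\<^sup>2 + (1 + 1/t) * v\<^sup>2" if "t > 0" for u v t :: real
proof -
  have "0 \<le> (t * u - v)\<^sup>2 / t" using that by simp
  also have "(t * u - v)\<^sup>2 / t = t * u\<^sup>2 - 2 * u * v + v\<^sup>2 / t"
    using that by (simp add: power2_eq_square field_simps)
  finally show ?thesis by (simp add: power2_eq_square algebra_simps)
qed

lemma RM_ineq:
  "(\<integral>\<^sup>+x. ennreal ((Rmax c m s x)\<^sup>2) \<partial>M) \<le> ennreal ((real m + 1)\<^sup>2 * (\<Sum>k\<in>{s..<s+2^m}. (c k)\<^sup>2))"
proof (induction m arbitrary: s)
  case 0
  have "Rmax c 0 s x = \<bar>c s * \<psi> s x\<bar>" for x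
  proof -
    have "{..(2::nat)^0} = {0,1}" by auto
    then show ?thesis unfolding Rmax_def S_def by simp
  qed
  then have "(\<integral>\<^sup>+x. ennreal ((Rmax c 0 s x)\<^sup>2) \<partial>M) = (\<integral>\<^sup>+x. ennreal ((\<Sum>k\<in>{s}. c k * \<psi> k x)\<^sup>2) \<partial>M)"
    by (simp add: power2_abs)
  also have "\<dots> = ennreal (\<Sum>k\<in>{s}. (c k)\<^sup>2)" by (rule sq_sum_nn) auto
  finally show ?case by simp
next
  case (Suc m)
  define t :: real where "t = real m + 1"
  have t: "t > 0" unfolding t_def by simp
  define A where "A = (\<Sum>k\<in>{s..<s+2^m}. (c k)\<^sup>2)"
  define B where "B = (\<Sum>k\<in>{s+2^m..<s+2^m+2^m}. (c k)\<^sup>2)"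
  have A0: "A \<ge> 0" and B0: "B \<ge> 0" unfolding A_def B_def by (auto intro: sum_nonneg)
  have AB: "(\<Sum>k\<in>{s..<s+2^Suc m}. (c k)\<^sup>2) = A + B"
    unfolding A_def B_def by (subst sum.atLeastLessThan_concat[symmetric, of s "s+2^m"]) (auto simp: mult_2 add.assoc)
  have pw: "(Rmax c (Suc m) s x)\<^sup>2 \<le> (Rmax c m s x)\<^sup>2 + (1 + t) * (S c s (2^m) x)\<^sup>2 + (1 + 1/t) * (Rmax c m (s + 2^m) x)\<^sup>2" for x
  proof -
    have r0: "0 \<le> Rmax c (Suc m) s x" by (rule Rmax_nonneg)
    have "(Rmax c (Suc m) s x)\<^sup>2 \<le> (max (Rmax c m s x) (\<bar>S c s (2^m) x\<bar> + Rmax c m (s + 2^m) x))\<^sup>2"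
      using Rmax_step[of c m s x] r0 by (intro power_mono) auto
    also have "\<dots> \<le> (Rmax c m s x)\<^sup>2 + (\<bar>S c s (2^m) x\<bar> + Rmax c m (s + 2^m) x)\<^sup>2"
      by (simp add: max_def)
    also have "(\<bar>S c s (2^m) x\<bar> + Rmax c m (s + 2^m) x)\<^sup>2 \<le> (1 + t) * (\<bar>S c s (2^m) x\<bar>)\<^sup>2 + (1 + 1/t) * (Rmax c m (s + 2^m) x)\<^sup>2"
      by (rule young[OF t])
    finally show ?thesis by simp
  qed
  have SA: "(\<integral>\<^sup>+x. ennreal ((S c s (2^m) x)\<^sup>2) \<partial>M) = ennreal A"
    unfolding S_def A_def by (rule sq_sum_nn) auto
  have "(\<integral>\<^sup>+x. ennreal ((Rmax c (Suc m) s x)\<^sup>2) \<partial>M) \<le>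
        (\<integral>\<^sup>+x. ennreal ((Rmax c m s x)\<^sup>2) + ennreal (1 + t) * ennreal ((S c s (2^m) x)\<^sup>2) + ennreal (1 + 1/t) * ennreal ((Rmax c m (s + 2^m) x)\<^sup>2) \<partial>M)"
    using pw t by (intro nn_integral_mono) (simp add: ennreal_plus[symmetric] ennreal_mult[symmetric] del: ennreal_plus)
  also have "\<dots> = (\<integral>\<^sup>+x. ennreal ((Rmax c m s x)\<^sup>2) \<partial>M) + ennreal (1 + t) * (\<integral>\<^sup>+x. ennreal ((S c s (2^m) x)\<^sup>2) \<partial>M) + ennreal (1 + 1/t) * (\<integral>\<^sup>+x. ennreal ((Rmax c m (s + 2^m) x)\<^sup>2) \<partial>M)"
    by (simp add: nn_integral_add nn_integral_cmult)
  also have "\<dots> \<le> ennreal ((real m + 1)\<^sup>2 * A) + ennreal (1 + t) * ennreal A + ennreal (1 + 1/t) * ennreal ((real m + 1)\<^sup>2 * B)"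
    using Suc.IH[of s] Suc.IH[of "s + 2^m"] unfolding SA unfolding A_def B_def
    by (intro add_mono mult_left_mono order.refl) (auto simp: add.assoc)
  also have "\<dots> = ennreal ((real m + 1)\<^sup>2 * A + (1 + t) * A + (1 + 1/t) * ((real m + 1)\<^sup>2 * B))"
    using t A0 B0 by (simp add: ennreal_plus ennreal_mult)
  also have "\<dots> \<le> ennreal ((real (Suc m) + 1)\<^sup>2 * (A + B))"
  proof (rule ennreal_leI)
    have "(1 + 1/t) * (real m + 1)\<^sup>2 = (real m + 2) * (real m + 1)"
      unfolding t_def by (simp add: power2_eq_square field_simps)
    then have "(1 + 1/t) * ((real m + 1)\<^sup>2 * B) \<le> (real m + 2)\<^sup>2 * B"
      using B0 by (simp add: mult.assoc[symmetric] power2_eq_square mult_right_mono)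
    moreover have "(real m + 1)\<^sup>2 * A + (1 + t) * A \<le> (real m + 2)\<^sup>2 * A"
    proof -
      have "(real m + 1)\<^sup>2 + (1 + t) \<le> (real m + 2)\<^sup>2"
        unfolding t_def by (simp add: power2_eq_square algebra_simps)
      then have "((real m + 1)\<^sup>2 + (1 + t)) * A \<le> (real m + 2)\<^sup>2 * A" using A0 by (rule mult_right_mono)
      then show ?thesis by (simp add: distrib_right)
    qed
    ultimately show "(real m + 1)\<^sup>2 * A + (1 + t) * A + (1 + 1/t) * ((real m + 1)\<^sup>2 * B) \<le> (real (Suc m) + 1)\<^sup>2 * (A + B)"
      by (simp add: algebra_simps)
  qed
  finally show ?case using AB by simp
qed

lemma S_concat: "S c s (i + j) x = S c s i x + S c (s + i) j x"
  unfolding S_def by (subst sum.atLeastLessThan_concat[symmetric, of s "s+i"]) (auto simp: add.assoc)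

theorem RM_ae:
  assumes wsum: "summable (\<lambda>k. (c k)\<^sup>2 * (ln (real k + 1))\<^sup>2)"
  shows "AE x in M. summable (\<lambda>k. c k * \<psi> k x)"
proof -
  define w where "w k = (c k)\<^sup>2 * (ln (real k + 1))\<^sup>2" for k
  have w0: "0 \<le> w k" for k unfolding w_def by simp
  have ws: "summable w" using wsum unfolding w_def .
  define E where "E m x = ennreal ((real m + 1)\<^sup>2 * (S c (2^m) (2^m) x)\<^sup>2) + ennreal ((Rmax c m (2^m) x)\<^sup>2)" for m x
  have Emeas[measurable]: "E m \<in> borel_measurable M" for m unfolding E_def by measurable
  have wk: "(real m + 1)\<^sup>2 * (c k)\<^sup>2 \<le> 9 * w k" if "2^m \<le> k" for m k
  proof -
    have l2: "2/3 \<le> ln (2::real)" by (rule ln2_ge_two_thirds)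
    have k1: "1 \<le> k" using that one_le_power[of "2::nat" m] by linarith
    have "ln 2 \<le> ln (real k + 1)" using k1 by simp
    have "real (2^m) \<le> real k + 1" using that by linarith
    then have "ln (real (2^m)) \<le> ln (real k + 1)" by (subst ln_le_cancel_iff) auto
    then have lm: "real m * ln 2 \<le> ln (real k + 1)" by (simp add: ln_realpow)
    have "real m * (2/3) \<le> real m * ln 2" using l2 by (intro mult_left_mono) auto
    then have "real m + 1 \<le> 3 * ln (real k + 1)" using lm l2 \<open>ln 2 \<le> ln (real k + 1)\<close> by linarith
    then have "(real m + 1)\<^sup>2 \<le> (3 * ln (real k + 1))\<^sup>2" by (intro power_mono) auto
    then have "(real m + 1)\<^sup>2 * (c k)\<^sup>2 \<le> (3 * ln (real k + 1))\<^sup>2 * (c k)\<^sup>2" by (intro mult_right_mono) auto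
    then show ?thesis unfolding w_def by (simp add: power_mult_distrib mult_ac)
  qed
  have Eint: "(\<integral>\<^sup>+x. E m x \<partial>M) \<le> ennreal (18 * (\<Sum>k\<in>{2^m..<2^m+2^m}. w k))" for m
  proof -
    define \<sigma> where "\<sigma> = (\<Sum>k\<in>{2^m..<2^m+2^m}. (c k)\<^sup>2)"
    have s0: "0 \<le> \<sigma>" unfolding \<sigma>_def by (auto intro: sum_nonneg)
    have "(\<integral>\<^sup>+x. E m x \<partial>M) = ennreal ((real m + 1)\<^sup>2) * (\<integral>\<^sup>+x. ennreal ((S c (2^m) (2^m) x)\<^sup>2) \<partial>M) + (\<integral>\<^sup>+x. ennreal ((Rmax c m (2^m) x)\<^sup>2) \<partial>M)"
      unfolding E_def by (simp add: nn_integral_add nn_integral_cmult ennreal_mult)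
    also have "(\<integral>\<^sup>+x. ennreal ((S c (2^m) (2^m) x)\<^sup>2) \<partial>M) = ennreal \<sigma>"
      unfolding S_def \<sigma>_def by (rule sq_sum_nn) auto
    also have "ennreal ((real m + 1)\<^sup>2) * ennreal \<sigma> + (\<integral>\<^sup>+x. ennreal ((Rmax c m (2^m) x)\<^sup>2) \<partial>M)
       \<le> ennreal ((real m + 1)\<^sup>2 * \<sigma>) + ennreal ((real m + 1)\<^sup>2 * \<sigma>)"
    proof (rule add_mono)
      show "ennreal ((real m + 1)\<^sup>2) * ennreal \<sigma> \<le> ennreal ((real m + 1)\<^sup>2 * \<sigma>)"
        using s0 by (simp add: ennreal_mult)
      show "(\<integral>\<^sup>+x. ennreal ((Rmax c m (2^m) x)\<^sup>2) \<partial>M) \<le> ennreal ((real m + 1)\<^sup>2 * \<sigma>)"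
        using RM_ineq[of c m "2^m"] unfolding \<sigma>_def by simp
    qed
    also have "\<dots> = ennreal (2 * ((real m + 1)\<^sup>2 * \<sigma>))" using s0 by (simp flip: ennreal_plus)
    also have "\<dots> \<le> ennreal (18 * (\<Sum>k\<in>{2^m..<2^m+2^m}. w k))"
    proof (rule ennreal_leI)
      have "(real m + 1)\<^sup>2 * \<sigma> = (\<Sum>k\<in>{2^m..<2^m+2^m}. (real m + 1)\<^sup>2 * (c k)\<^sup>2)"
        unfolding \<sigma>_def by (simp add: sum_distrib_left)
      also have "\<dots> \<le> (\<Sum>k\<in>{2^m..<2^m+2^m}. 9 * w k)" by (intro sum_mono wk) auto
      also have "\<dots> = 9 * (\<Sum>k\<in>{2^m..<2^m+2^m}. w k)" by (simp add: sum_distrib_left)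
      finally show "2 * ((real m + 1)\<^sup>2 * \<sigma>) \<le> 18 * (\<Sum>k\<in>{2^m..<2^m+2^m}. w k)"
        by linarith
    qed
    finally show ?thesis .
  qed
  have blocks: "(\<Sum>m<N. \<Sum>k\<in>{2^m..<2^m+2^m}. w k) = (\<Sum>k\<in>{1..<2^N}. w k)" for N
  proof (induction N)
    case (Suc N)
    have "(\<Sum>k\<in>{1..<2^N}. w k) + (\<Sum>k\<in>{2^N..<2^N+2^N}. w k) = (\<Sum>k\<in>{1..<2^Suc N}. w k)"
      by (subst sum.atLeastLessThan_concat) (auto simp: mult_2)
    then show ?case using Suc by simp
  qed simp
  have gs: "summable (\<lambda>m. 18 * (\<Sum>k\<in>{2^m..<2^m+2^m}. w k))"
  proof (rule summableI_nonneg_bounded)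
    show "0 \<le> 18 * (\<Sum>k\<in>{2^m..<2^m+2^m}. w k)" for m using w0 by (auto intro: sum_nonneg)
    show "(\<Sum>m<N. 18 * (\<Sum>k\<in>{2^m..<2^m+2^m}. w k)) \<le> 18 * suminf w" for N
      using sum_le_suminf[OF ws, of "{1..<2^N}"] w0 by (simp add: sum_distrib_left[symmetric] blocks)
  qed
  have "(\<integral>\<^sup>+x. (\<Sum>m. E m x) \<partial>M) = (\<Sum>m. \<integral>\<^sup>+x. E m x \<partial>M)"
    by (rule nn_integral_suminf) simp
  also have "\<dots> \<le> (\<Sum>m. ennreal (18 * (\<Sum>k\<in>{2^m..<2^m+2^m}. w k)))"
    by (intro suminf_le Eint summableI)
  finally have le: "(\<integral>\<^sup>+x. (\<Sum>m. E m x) \<partial>M) \<le> (\<Sum>m. ennreal (18 * (\<Sum>k\<in>{2^m..<2^m+2^m}. w k)))" .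
  have "(\<Sum>m. ennreal (18 * (\<Sum>k\<in>{2^m..<2^m+2^m}. w k))) \<noteq> top"
    using w0 by (intro ennreal_suminf_neq_top[OF gs]) (auto intro: sum_nonneg)
  then have "(\<integral>\<^sup>+x. (\<Sum>m. E m x) \<partial>M) \<noteq> \<infinity>"
    using neq_top_trans[OF _ le] by (simp add: infinity_ennreal_def)
  moreover have "(\<lambda>x. \<Sum>m. E m x) \<in> borel_measurable M" by measurable
  ultimately have "AE x in M. (\<Sum>m. E m x) \<noteq> \<infinity>"
    using nn_integral_noteq_infinite by blast
  then show ?thesis
  proof (rule eventually_mono)
    fix x assume fin0: "(\<Sum>m. E m x) \<noteq> \<infinity>"
    then have fin: "(\<Sum>m. E m x) \<noteq> top" by (simp add: infinity_ennreal_def)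
    define P where "P n = S c 0 n x" for n
    define D where "D m = Rmax c m (2^m) x" for m
    have "(\<Sum>m. ennreal ((real m + 1)\<^sup>2 * (S c (2^m) (2^m) x)\<^sup>2)) \<le> (\<Sum>m. E m x)"
      unfolding E_def by (intro suminf_le summableI) (simp_all add: add_increasing add_increasing2)
    then have "(\<Sum>m. ennreal ((real m + 1)\<^sup>2 * (S c (2^m) (2^m) x)\<^sup>2)) \<noteq> top"
      by (rule neq_top_trans[OF fin])
    then have sa0: "summable (\<lambda>m. (real m + 1)\<^sup>2 * (S c (2^m) (2^m) x)\<^sup>2)"
      by (intro summable_suminf_not_top) auto
    have "(\<Sum>m. ennreal ((Rmax c m (2^m) x)\<^sup>2)) \<le> (\<Sum>m. E m x)"
      unfolding E_def by (intro suminf_le summableI) (simp_all add: add_increasing add_increasing2)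
    then have "(\<Sum>m. ennreal ((Rmax c m (2^m) x)\<^sup>2)) \<noteq> top"
      by (rule neq_top_trans[OF fin])
    then have sb: "summable (\<lambda>m. (D m)\<^sup>2)" unfolding D_def
      by (intro summable_suminf_not_top) auto
    have dif: "P (2^Suc m) - P (2^m) = S c (2^m) (2^m) x" for m
      unfolding P_def using S_concat[of c 0 "2^m" "2^m" x] by (simp add: mult_2)
    have sa: "summable (\<lambda>m. (real m + 1)\<^sup>2 * (P (2^Suc m) - P (2^m))\<^sup>2)"
      unfolding dif by (rule sa0)
    have bd: "\<bar>P n - P (2^m)\<bar> \<le> D m" if "2^m \<le> n" "n \<le> 2^Suc m" for m n
    proof -
      have "P n - P (2^m) = S c (2^m) (n - 2^m) x"
        unfolding P_def using S_concat[of c 0 "2^m" "n - 2^m" x] that by simp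
      moreover have "n - 2^m \<le> 2^m" using that by simp
      ultimately show ?thesis unfolding D_def by (simp add: Rmax_ge)
    qed
    have "convergent P" by (rule conv_from_blocks[OF sa sb bd])
    moreover have "P = (\<lambda>n. \<Sum>k<n. c k * \<psi> k x)"
      unfolding P_def S_def by (simp add: atLeast0LessThan fun_eq_iff)
    ultimately show "summable (\<lambda>k. c k * \<psi> k x)"
      by (simp add: summable_iff_convergent)
  qed
qed

end

lemma sum_split_lt: "N \<le> n \<Longrightarrow> (\<Sum>k<n. g k) = (\<Sum>k<N. g k) + (\<Sum>k\<in>{N..<n}. g k)" for g :: "nat \<Rightarrow> real"
  by (simp add: atLeast0LessThan[symmetric] sum.atLeastLessThan_concat)

lemma landau_l2:
  fixes b :: "nat \<Rightarrow> real"
  assumes H: "\<And>a. summable (\<lambda>n. (a n)\<^sup>2) \<Longrightarrow> \<exists>K. eventually (\<lambda>n. \<bar>\<Sum>k<n. a k * b k\<bar> \<le> K) sequentially"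
  shows "summable (\<lambda>n. (b n)\<^sup>2)"
proof (rule ccontr)
  assume ns: "\<not> summable (\<lambda>n. (b n)\<^sup>2)"
  define B where "B n = 1 + (\<Sum>k<n. (b k)\<^sup>2)" for n
  have B1: "1 \<le> B n" for n unfolding B_def by (auto intro: sum_nonneg)
  have Bmono: "B m \<le> B n" if "m \<le> n" for m n
    unfolding B_def using that by (auto intro!: sum_mono2)
  have BS: "B (Suc k) = B k + (b k)\<^sup>2" for k unfolding B_def by simp
  have unb: "\<exists>n. B n > K" for K
  proof (rule ccontr)
    assume "\<not> (\<exists>n. B n > K)"
    then have "1 + (\<Sum>k<n. (b k)\<^sup>2) \<le> K" for n unfolding B_def by (simp add: not_less)
    then have "(\<Sum>k<n. (b k)\<^sup>2) \<le> K" for n using \<open>\<And>n. 1 + (\<Sum>k<n. (b k)\<^sup>2) \<le> K\<close>[of n] by linarith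
    then have "summable (\<lambda>n. (b n)\<^sup>2)" by (intro summableI_nonneg_bounded) auto
    with ns show False by simp
  qed
  define a where "a k = b k / B (Suc k)" for k
  have asq: "(a k)\<^sup>2 \<le> 1 / B k - 1 / B (Suc k)" for k
  proof -
    have p: "0 < B k" "0 < B (Suc k)" using B1[of k] B1[of "Suc k"] by auto
    have "(a k)\<^sup>2 = (b k)\<^sup>2 / (B (Suc k) * B (Suc k))" unfolding a_def by (simp add: power_divide power2_eq_square)
    also have "\<dots> \<le> (b k)\<^sup>2 / (B k * B (Suc k))"
      using p Bmono[of k "Suc k"] by (intro divide_left_mono mult_right_mono mult_pos_pos) auto
    also have "\<dots> = 1 / B k - 1 / B (Suc k)" using p unfolding BS by (simp add: field_simps)
    finally show ?thesis .
  qed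
  have "summable (\<lambda>n. (a n)\<^sup>2)"
  proof (rule summableI_nonneg_bounded)
    fix n
    have "(\<Sum>k<n. (a k)\<^sup>2) \<le> (\<Sum>k<n. 1 / B k - 1 / B (Suc k))" by (intro sum_mono asq)
    also have "\<dots> = 1 / B 0 - 1 / B n" using sum_lessThan_telescope'[of "\<lambda>k. 1 / B k" n] by simp
    also have "\<dots> \<le> 1" using B1[of n] by (simp add: B_def)
    finally show "(\<Sum>k<n. (a k)\<^sup>2) \<le> 1" .
  qed auto
  then obtain K where K: "eventually (\<lambda>n. \<bar>\<Sum>k<n. a k * b k\<bar> \<le> K) sequentially" using H by blast
  define s where "s n = (\<Sum>k<n. a k * b k)" for n
  have ab0: "0 \<le> a k * b k" for k unfolding a_def using B1[of "Suc k"] by (simp add: mult_nonneg_nonneg)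
  have smono: "s m \<le> s n" if "m \<le> n" for m n
    unfolding s_def using that ab0 by (intro sum_mono2) auto
  have sK: "s n \<le> K" for n
  proof -
    from K obtain N where N: "\<And>n. n \<ge> N \<Longrightarrow> \<bar>s n\<bar> \<le> K" unfolding s_def eventually_sequentially by auto
    have "s n \<le> s (max n N)" by (intro smono) auto
    also have "\<dots> \<le> K" using N[of "max n N"] by auto
    finally show ?thesis .
  qed
  have incr: "s n - s N \<ge> 1 - B N / B n" if "N \<le> n" for N n
  proof -
    have pn: "0 < B n" using B1[of n] by auto
    have "s n - s N = (\<Sum>k\<in>{N..<n}. a k * b k)"
      unfolding s_def using sum_split_lt[OF that] by simp
    also have "\<dots> \<ge> (\<Sum>k\<in>{N..<n}. (b k)\<^sup>2 / B n)"
    proof (intro sum_mono)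
      fix k assume k: "k \<in> {N..<n}"
      have "0 < B (Suc k)" using B1[of "Suc k"] by auto
      moreover have "B (Suc k) \<le> B n" using k by (intro Bmono) auto
      ultimately have "(b k)\<^sup>2 / B n \<le> (b k)\<^sup>2 / B (Suc k)" by (intro divide_left_mono) auto
      then show "(b k)\<^sup>2 / B n \<le> a k * b k" unfolding a_def by (simp add: power2_eq_square)
    qed
    also have "(\<Sum>k\<in>{N..<n}. (b k)\<^sup>2 / B n) = (B n - B N) / B n"
    proof -
      have "B n - B N = (\<Sum>k\<in>{N..<n}. (b k)\<^sup>2)"
        unfolding B_def using sum_split_lt[OF that] by simp
      then show ?thesis by (simp add: sum_divide_distrib)
    qed
    also have "\<dots> = 1 - B N / B n" using pn by (simp add: field_simps)
    finally show ?thesis .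
  qed
  have "\<exists>n. s n \<ge> real j / 2" for j :: nat
  proof (induction j)
    case 0 show ?case by (rule exI[of _ 0]) (simp add: s_def)
  next
    case (Suc j)
    then obtain N where N: "s N \<ge> real j / 2" by auto
    obtain n where n: "B n > 2 * B N" using unb by auto
    have "N \<le> n"
    proof (rule ccontr)
      assume "\<not> N \<le> n" then have "B n \<le> B N" by (intro Bmono) auto
      with n B1[of N] show False by auto
    qed
    have "B N / B n \<le> 1/2" using n B1[of N] by (simp add: field_simps)
    then have "s n \<ge> real (Suc j) / 2" using incr[OF \<open>N \<le> n\<close>] N by simp
    then show ?case by blast
  qed
  moreover obtain j :: nat where "real j > 2 * K" using reals_Archimedean2 by blast
  ultimately obtain n where "s n \<ge> real j / 2" by blast
  with sK[of n] \<open>real j > 2 * K\<close> show False by linarith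
qed


lemma amgm2: fixes q d :: real assumes q: "q > 0" shows "\<bar>d\<bar> \<le> (1 / q + q * d\<^sup>2) / 2"
proof -
  have "0 \<le> (1 - q * \<bar>d\<bar>)\<^sup>2" by simp
  then have "q * (\<bar>d\<bar> * 2) \<le> 1 + d\<^sup>2 * q\<^sup>2"
    by (simp add: power2_diff power_mult_distrib power2_abs algebra_simps)
  then show ?thesis using q by (simp add: field_simps power2_eq_square)
qed

lemma ind_sq: "indicator A x * indicator A x = (indicator A x :: real)"
  by (simp split: split_indicator)

locale ctx = bvf f Mv for f Mv +
  fixes \<phi> :: "nat \<Rightarrow> real \<Rightarrow> real" and d :: "nat \<Rightarrow> real"
  assumes ons: "orthonormal_system \<phi>"
begin

definition \<psi> :: "nat \<Rightarrow> real \<Rightarrow> real" where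
  "\<psi> k x = indicator {0..1} x * \<phi> (Suc k) x"

lemma ons1: "\<phi> n \<in> borel_measurable lborel" "set_integrable lborel {0..1} (\<lambda>x. (\<phi> n x)\<^sup>2)" if "n \<ge> 1" for n
  using ons that unfolding orthonormal_system_def by blast+

lemma ons2: "(LBINT x:{0..1}. \<phi> n x * \<phi> m x) = (if n = m then 1 else 0)" if "n \<ge> 1" "m \<ge> 1" for n m
proof -
  have "\<forall>n\<ge>1. \<forall>m\<ge>1. (LBINT x:{0..1}. \<phi> n x * \<phi> m x) = (if n = m then 1 else 0)"
    using ons unfolding orthonormal_system_def by (rule conjunct2)
  then show ?thesis using that by blast
qed

lemma phi_meas[measurable]: "\<phi> (Suc k) \<in> borel_measurable lborel"
  using ons1(1)[of "Suc k"] by simp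

lemma psi_meas[measurable]: "\<psi> k \<in> borel_measurable lborel"
  unfolding \<psi>_def by measurable

lemma psi_sq: "integrable lborel (\<lambda>x. (\<psi> k x)\<^sup>2)"
proof -
  have "set_integrable lborel {0..1} (\<lambda>x. (\<phi> (Suc k) x)\<^sup>2)"
    using ons1(2)[of "Suc k"] by simp
  moreover have "(\<psi> k x)\<^sup>2 = indicator {0..1} x *\<^sub>R (\<phi> (Suc k) x)\<^sup>2" for x
    unfolding \<psi>_def by (simp add: power2_eq_square split: split_indicator)
  ultimately show ?thesis unfolding set_integrable_def by simp
qed

lemma psi_orth: "integral\<^sup>L lborel (\<lambda>x. \<psi> k x * \<psi> l x) = (if k = l then 1 else 0)"
proof -
  have "(LBINT x:{0..1}. \<phi> (Suc k) x * \<phi> (Suc l) x) = (if Suc k = Suc l then 1 else 0)"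
    using ons2[of "Suc k" "Suc l"] by simp
  moreover have "\<psi> k x * \<psi> l x = indicator {0..1} x *\<^sub>R (\<phi> (Suc k) x * \<phi> (Suc l) x)" for x
    unfolding \<psi>_def by (simp split: split_indicator)
  ultimately show ?thesis unfolding set_lebesgue_integral_def by simp
qed

sublocale O: ons_abs lborel \<psi>
  by unfold_locales (auto simp: psi_sq psi_orth)

lemma ind_int: "integrable lborel (indicator {0..1} :: real \<Rightarrow> real)"
  by (intro integrable_real_indicator) auto

lemma psi_int: "integrable lborel (\<psi> k)"
proof (rule Bochner_Integration.integrable_bound[of _ "\<lambda>x. indicator {0..1} x + (\<psi> k x)\<^sup>2"])
  show "integrable lborel (\<lambda>x. indicator {0..1} x + (\<psi> k x)\<^sup>2)"
    using ind_int psi_sq by auto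
  show "AE x in lborel. norm (\<psi> k x) \<le> norm (indicator {0..1} x + (\<psi> k x)\<^sup>2)"
  proof (intro AE_I2)
    fix x
    have "\<bar>\<phi> (Suc k) x\<bar> \<le> (1 / 1 + 1 * (\<phi> (Suc k) x)\<^sup>2) / 2" by (rule amgm2) simp
    moreover have "0 \<le> (\<phi> (Suc k) x)\<^sup>2" by simp
    ultimately have "\<bar>\<phi> (Suc k) x\<bar> \<le> 1 + (\<phi> (Suc k) x)\<^sup>2" by simp
    then show "norm (\<psi> k x) \<le> norm (indicator {0..1} x + (\<psi> k x)\<^sup>2)"
      unfolding \<psi>_def by (simp split: split_indicator add: power2_eq_square)
  qed
qed simp

definition fI :: "real \<Rightarrow> real" where "fI x = indicator {0..1} x * f x"

lemma fI_meas[measurable]: "fI \<in> borel_measurable lborel"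
  unfolding fI_def by (rule f_meas)

definition Fb where "Fb = \<bar>f 0\<bar> + Mv"

lemma Fb_nonneg: "0 \<le> Fb" using f_bounded[of 0] unfolding Fb_def by auto

lemma fI_bound: "\<bar>fI x\<bar> \<le> Fb"
proof -
  have "0 \<le> Fb" by (rule Fb_nonneg)
  then show ?thesis unfolding fI_def Fb_def using f_bounded[of x] by (auto split: split_indicator)
qed

lemma fI_psi_int: "integrable lborel (\<lambda>x. fI x * \<psi> k x)"
proof (rule Bochner_Integration.integrable_bound[of _ "\<lambda>x. Fb * \<psi> k x"])
  show "integrable lborel (\<lambda>x. Fb * \<psi> k x)" using psi_int by auto
  show "AE x in lborel. norm (fI x * \<psi> k x) \<le> norm (Fb * \<psi> k x)"
    using fI_bound Fb_nonneg by (intro AE_I2) (simp add: abs_mult mult_right_mono)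
qed simp

lemma coef_eq: "coef \<phi> f (Suc k) = integral\<^sup>L lborel (\<lambda>x. fI x * \<psi> k x)"
proof -
  have "indicator {0..1} x *\<^sub>R (f x * \<phi> (Suc k) x) = fI x * \<psi> k x" for x
    unfolding fI_def \<psi>_def by (simp split: split_indicator)
  then show ?thesis unfolding coef_def set_lebesgue_integral_def by simp
qed

definition e :: "(nat \<Rightarrow> real) \<Rightarrow> nat \<Rightarrow> real" where
  "e a k = d (Suc k) * a (Suc k) * ln (real (Suc k))"

lemma QI_eq: "indicator {0..1} x * Qn \<phi> n d a x = O.S (e a) 0 n x"
proof -
  have "indicator {0..1} x * Qn \<phi> n d a x = (\<Sum>k\<in>{Suc 0..n}. d k * a k * ln (real k) * (indicator {0..1} x * \<phi> k x))"
    unfolding Qn_def by (simp add: sum_distrib_left mult_ac)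
  also have "\<dots> = (\<Sum>k<n. e a k * \<psi> k x)"
    unfolding sum.atLeast1_atMost_eq e_def \<psi>_def by simp
  finally show ?thesis unfolding O.S_def by (simp add: atLeast0LessThan)
qed

end

lemma int_split:
  fixes g :: "real \<Rightarrow> real"
  assumes g: "integrable lborel g" and "0 \<le> s" "s \<le> t"
  shows "integral\<^sup>L lborel (\<lambda>x. indicator {0..t} x * g x) =
         integral\<^sup>L lborel (\<lambda>x. indicator {0..s} x * g x) + integral\<^sup>L lborel (\<lambda>x. indicator {s<..t} x * g x)"
proof -
  have "indicator {0..t} x * g x = indicator {0..s} x * g x + indicator {s<..t} x * g x" for x
    using assms by (auto split: split_indicator)
  moreover have "integrable lborel (\<lambda>x. indicator A x * g x)" if "A \<in> sets lborel" for A
    using integrable_mult_indicator[OF that g] by simp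
  ultimately show ?thesis by (simp add: Bochner_Integration.integral_add)
qed

lemma int_zero:
  fixes g :: "real \<Rightarrow> real"
  shows "integral\<^sup>L lborel (\<lambda>x. indicator {0..0} x * g x) = 0"
proof (rule integral_eq_zero_AE)
  show "AE x in lborel. indicator {0..0} x * g x = 0"
    using AE_lborel_singleton[of 0] by eventually_elim auto
qed

lemma int_ind_Ioc: "s \<le> t \<Longrightarrow> integral\<^sup>L lborel (indicator {s<..t} :: real \<Rightarrow> real) = t - s"
  by (simp add: measure_def)

lemma abel:
  fixes u v :: "nat \<Rightarrow> real"
  shows "(\<Sum>i<n. u (Suc i) * (v (Suc i) - v i)) = u n * v n - u 0 * v 0 - (\<Sum>i<n. v i * (u (Suc i) - u i))"
  by (induction n) (auto simp: algebra_simps)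

lemma d_bound:
  fixes d :: "nat \<Rightarrow> real"
  assumes "(\<lambda>n. d n) \<in> O(\<lambda>n. sqrt (real n) / (ln (real n + 1))\<^sup>2)"
  shows "\<exists>K>0. \<forall>k. (d k * ln (real k))\<^sup>2 \<le> K * real k"
proof -
  from assms obtain c where c: "c > 0" and ev: "eventually (\<lambda>n. norm (d n) \<le> c * norm (sqrt (real n) / (ln (real n + 1))\<^sup>2)) sequentially"
    by (elim landau_o.bigE)
  from ev obtain N where N: "\<And>n. n \<ge> N \<Longrightarrow> \<bar>d n\<bar> \<le> c * \<bar>sqrt (real n) / (ln (real n + 1))\<^sup>2\<bar>"
    unfolding eventually_sequentially by auto
  define K0 where "K0 = (\<Sum>k<N. (d k * ln (real k))\<^sup>2)"
  have K00: "0 \<le> K0" unfolding K0_def by (auto intro: sum_nonneg)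
  define K where "K = K0 + 3 * c\<^sup>2 + 1"
  have "(d k * ln (real k))\<^sup>2 \<le> K * real k" for k
  proof (cases "k = 0")
    case True then show ?thesis by simp
  next
    case False
    then have k1: "1 \<le> real k" by simp
    show ?thesis
    proof (cases "k < N")
      case True
      have "(d k * ln (real k))\<^sup>2 \<le> K0" unfolding K0_def
        using True by (intro member_le_sum) auto
      also have "\<dots> \<le> K0 * real k" using K00 k1 by (simp add: mult_le_cancel_left1)
      also have "\<dots> \<le> K * real k" using k1 unfolding K_def by (intro mult_right_mono) auto
      finally show ?thesis .
    next
      case False
      then have dk: "\<bar>d k\<bar> \<le> c * (sqrt (real k) / (ln (real k + 1))\<^sup>2)" using N[of k] by simp
      have l2: "2/3 \<le> ln (2::real)" by (rule ln2_ge_two_thirds)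
      have lk0: "0 \<le> ln (real k)" using k1 by simp
      have lkk: "ln (real k) \<le> ln (real k + 1)" using k1 by simp
      have "ln 2 \<le> ln (real k + 1)" using k1 by simp
      then have l1: "2/3 \<le> ln (real k + 1)" using l2 by linarith
      have "\<bar>d k * ln (real k)\<bar> = \<bar>d k\<bar> * ln (real k)" using lk0 by (simp add: abs_mult)
      also have "\<dots> \<le> c * (sqrt (real k) / (ln (real k + 1))\<^sup>2) * ln (real k + 1)"
        using dk lk0 lkk by (intro mult_mono) auto
      also have "\<dots> = c * sqrt (real k) / ln (real k + 1)" using l1 by (simp add: power2_eq_square)
      finally have A: "\<bar>d k * ln (real k)\<bar> \<le> c * sqrt (real k) / ln (real k + 1)" .
      have "(d k * ln (real k))\<^sup>2 = \<bar>d k * ln (real k)\<bar>\<^sup>2" by simp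
      also have "\<dots> \<le> (c * sqrt (real k) / ln (real k + 1))\<^sup>2" using A by (intro power_mono) auto
      also have "\<dots> = c\<^sup>2 * real k / (ln (real k + 1))\<^sup>2" by (simp add: power_divide power_mult_distrib)
      also have "\<dots> \<le> c\<^sup>2 * real k / (2/3)\<^sup>2"
        using l1 k1 by (intro divide_left_mono power_mono mult_pos_pos) auto
      also have "\<dots> = (9/4 * c\<^sup>2) * real k" by (simp add: field_simps power2_eq_square)
      also have "\<dots> \<le> K * real k"
      proof (rule mult_right_mono)
        have "0 \<le> c\<^sup>2" by simp
        then show "9/4 * c\<^sup>2 \<le> K" unfolding K_def using K00 by linarith
      qed simp
      finally show ?thesis .
    qed
  qed
  moreover have "K > 0" unfolding K_def using K00 zero_le_power2[of c] by linarith
  ultimately show ?thesis by blast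
qed


context ctx
begin

lemma S_int: "integrable lborel (O.S c s j)"
  unfolding O.S_def using psi_int by auto

lemma fS_int: "integrable lborel (\<lambda>x. fI x * O.S c s j x)"
proof -
  have "fI x * O.S c s j x = (\<Sum>k\<in>{s..<s+j}. c k * (fI x * \<psi> k x))" for x
    unfolding O.S_def by (simp add: sum_distrib_left mult_ac)
  then show ?thesis using fI_psi_int by simp
qed

lemma ind_int_gen: "A \<in> sets lborel \<Longrightarrow> integrable lborel g \<Longrightarrow> integrable lborel (\<lambda>x. indicator A x * g x)"
  for g :: "real \<Rightarrow> real"
  using integrable_mult_indicator[of A lborel g] by simp

lemma Bn_ge: "1 \<le> i \<Longrightarrow> i < n \<Longrightarrow> \<bar>LBINT x:{0..real i / real n}. Qn \<phi> n d a x\<bar> \<le> Bn \<phi> n d a"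
  unfolding Bn_def by (intro Max_ge) auto

lemma Bn_nonneg: "2 \<le> n \<Longrightarrow> 0 \<le> Bn \<phi> n d a"
proof -
  assume n: "2 \<le> n"
  have "\<bar>LBINT x:{0..real 1 / real n}. Qn \<phi> n d a x\<bar> \<le> Bn \<phi> n d a" using n by (intro Bn_ge) auto
  then show ?thesis by (meson abs_ge_zero order_trans)
qed

lemma main_bound:
  fixes n :: nat and a :: "nat \<Rightarrow> real"
  assumes n: "2 \<le> n"
  defines "q \<equiv> (\<Sum>k<n. (e a k)\<^sup>2)"
  shows "\<bar>\<Sum>k<n. e a k * coef \<phi> f (Suc k)\<bar> \<le>
     Mv * (q / (2 * real n) + 1/2) + \<bar>f 1\<bar> * (Bn \<phi> n d a + q / (2 * real n) + 1/2) + Bn \<phi> n d a * Mv"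
proof -
  define h where "h = O.S (e a) 0 n"
  have hint: "integrable lborel h" unfolding h_def by (rule S_int)
  have fhint: "integrable lborel (\<lambda>x. fI x * h x)" unfolding h_def by (rule fS_int)
  have h2int: "integrable lborel (\<lambda>x. (h x)\<^sup>2)" and h2: "integral\<^sup>L lborel (\<lambda>x. (h x)\<^sup>2) = q"
    unfolding h_def O.S_def q_def using O.sq_sum_int[of "{0..<0+n}" "e a"] by (auto simp: atLeast0LessThan)
  have q0: "0 \<le> q" unfolding q_def by (auto intro: sum_nonneg)
  define G1 where "G1 t = integral\<^sup>L lborel (\<lambda>x. indicator {0..t} x * h x)" for t
  define G2 where "G2 t = integral\<^sup>L lborel (\<lambda>x. indicator {0..t} x * (fI x * h x))" for t
  define xs where "xs i = real i / real n" for i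
  have npos: "0 < real n" using n by simp
  have xs0: "xs 0 = 0" and xsn: "xs n = 1" unfolding xs_def using npos by auto
  have xsnn: "0 \<le> xs i" for i unfolding xs_def by simp
  have xsle: "xs i \<le> xs (Suc i)" for i unfolding xs_def using npos by (simp add: divide_right_mono)
  have xs1: "i \<le> n \<Longrightarrow> xs i \<le> 1" for i unfolding xs_def using npos by simp
  have xsd: "xs (Suc i) - xs i = 1 / real n" for i unfolding xs_def by (simp add: add_divide_distrib)
  have indI: "integrable lborel (indicator {xs i<..xs (Suc i)} :: real \<Rightarrow> real)" for i
    using xsle[of i] by (intro integrable_real_indicator) auto
  define W where "W = q / (2 * real n) + 1/2"
  have W0: "0 \<le> W" unfolding W_def using q0 npos by auto
  have Lint: "integral\<^sup>L lborel (\<lambda>x. indicator {xs i<..xs (Suc i)} x * \<bar>h x\<bar>) \<le> W" for i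
  proof -
    have "integral\<^sup>L lborel (\<lambda>x. indicator {xs i<..xs (Suc i)} x * \<bar>h x\<bar>) \<le>
          integral\<^sup>L lborel (\<lambda>x. (real n * indicator {xs i<..xs (Suc i)} x + (h x)\<^sup>2 / real n) / 2)"
    proof (rule integral_mono)
      show "integrable lborel (\<lambda>x. indicator {xs i<..xs (Suc i)} x * \<bar>h x\<bar>)"
        using hint by (intro ind_int_gen) auto
      show "integrable lborel (\<lambda>x. (real n * indicator {xs i<..xs (Suc i)} x + (h x)\<^sup>2 / real n) / 2)"
        using h2int indI[of i] by (intro integrable_divide Bochner_Integration.integrable_add integrable_mult_right) auto
      fix x
      have "\<bar>h x\<bar> \<le> (1 / (1 / real n) + (1 / real n) * (h x)\<^sup>2) / 2" by (rule amgm2) (use npos in auto)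
      then show "indicator {xs i<..xs (Suc i)} x * \<bar>h x\<bar> \<le> (real n * indicator {xs i<..xs (Suc i)} x + (h x)\<^sup>2 / real n) / 2"
        using npos by (auto split: split_indicator simp: field_simps)
    qed
    also have "\<dots> = (real n * (xs (Suc i) - xs i) + q / real n) / 2"
      using h2int h2 xsle[of i] by (simp add: int_ind_Ioc)
    also have "\<dots> = W" unfolding W_def xsd using npos by (simp add: field_simps)
    finally show ?thesis .
  qed
  have Vd: "\<bar>f x - f (xs (Suc i))\<bar> \<le> Vf f (xs (Suc i)) - Vf f (xs i)"
    if "i < n" "x \<in> {xs i<..xs (Suc i)}" for i x
  proof -
    have "Vf f x + \<bar>f (xs (Suc i)) - f x\<bar> \<le> Vf f (xs (Suc i))"
      using that xsnn[of i] xs1[of "Suc i"] by (intro V_step) auto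
    moreover have "Vf f (xs i) \<le> Vf f x"
      using that xsnn[of i] xs1[of "Suc i"] by (intro V_mono) auto
    ultimately show ?thesis by linarith
  qed
  have Ei: "\<bar>G2 (xs (Suc i)) - G2 (xs i) - f (xs (Suc i)) * (G1 (xs (Suc i)) - G1 (xs i))\<bar>
            \<le> (Vf f (xs (Suc i)) - Vf f (xs i)) * W" if i: "i < n" for i
  proof -
    define A where "A = {xs i<..xs (Suc i)}"
    have d1: "G1 (xs (Suc i)) - G1 (xs i) = integral\<^sup>L lborel (\<lambda>x. indicator A x * h x)"
      unfolding G1_def A_def using int_split[OF hint xsnn[of i] xsle[of i]] by simp
    have d2: "G2 (xs (Suc i)) - G2 (xs i) = integral\<^sup>L lborel (\<lambda>x. indicator A x * (fI x * h x))"
      unfolding G2_def A_def using int_split[OF fhint xsnn[of i] xsle[of i]] by simp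
    have i1: "integrable lborel (\<lambda>x. indicator A x * h x)" unfolding A_def using hint by (intro ind_int_gen) auto
    have i2: "integrable lborel (\<lambda>x. indicator A x * (fI x * h x))" unfolding A_def using fhint by (intro ind_int_gen) auto
    define D where "D x = indicator A x * (fI x * h x) - f (xs (Suc i)) * (indicator A x * h x)" for x
    have i3: "integrable lborel (\<lambda>x. f (xs (Suc i)) * (indicator A x * h x))"
      using i1 by (rule integrable_mult_right)
    have eqE: "G2 (xs (Suc i)) - G2 (xs i) - f (xs (Suc i)) * (G1 (xs (Suc i)) - G1 (xs i)) = integral\<^sup>L lborel D"
    proof -
      have "integral\<^sup>L lborel D = integral\<^sup>L lborel (\<lambda>x. indicator A x * (fI x * h x)) - integral\<^sup>L lborel (\<lambda>x. f (xs (Suc i)) * (indicator A x * h x))"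
        unfolding D_def by (rule Bochner_Integration.integral_diff[OF i2 i3])
      also have "integral\<^sup>L lborel (\<lambda>x. f (xs (Suc i)) * (indicator A x * h x)) = f (xs (Suc i)) * integral\<^sup>L lborel (\<lambda>x. indicator A x * h x)"
        by (rule integral_mult_right_zero)
      finally show ?thesis unfolding d1 d2 by simp
    qed
    have iD: "integrable lborel D" unfolding D_def using i2 i3 by (rule Bochner_Integration.integrable_diff)
    have "\<bar>integral\<^sup>L lborel D\<bar> \<le> integral\<^sup>L lborel (\<lambda>x. \<bar>D x\<bar>)"
      using integral_norm_bound[of lborel D] by simp
    also have "\<dots> \<le> integral\<^sup>L lborel (\<lambda>x. (Vf f (xs (Suc i)) - Vf f (xs i)) * (indicator A x * \<bar>h x\<bar>))"
    proof (rule integral_mono)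
      show "integrable lborel (\<lambda>x. \<bar>D x\<bar>)"
        using iD by (rule integrable_abs)
      show "integrable lborel (\<lambda>x. (Vf f (xs (Suc i)) - Vf f (xs i)) * (indicator A x * \<bar>h x\<bar>))"
        unfolding A_def using hint by (intro integrable_mult_right ind_int_gen integrable_abs) auto
      fix x
      show "\<bar>D x\<bar> \<le> (Vf f (xs (Suc i)) - Vf f (xs i)) * (indicator A x * \<bar>h x\<bar>)"
      proof (cases "x \<in> A")
        case True
        then have x01: "x \<in> {0..1}" unfolding A_def using xsnn[of i] xs1[of "Suc i"] i by auto
        then have "fI x = f x" unfolding fI_def by simp
        then have "D x = (f x - f (xs (Suc i))) * h x"
          unfolding D_def using True by (simp add: algebra_simps)
        then have "\<bar>D x\<bar> = \<bar>f x - f (xs (Suc i))\<bar> * \<bar>h x\<bar>" by (simp add: abs_mult)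
        also have "\<dots> \<le> (Vf f (xs (Suc i)) - Vf f (xs i)) * \<bar>h x\<bar>"
          using Vd[OF i True[unfolded A_def]] by (intro mult_right_mono) auto
        finally show ?thesis using True by simp
      next
        case False
        then show ?thesis unfolding D_def by simp
      qed
    qed
    also have "\<dots> = (Vf f (xs (Suc i)) - Vf f (xs i)) * integral\<^sup>L lborel (\<lambda>x. indicator A x * \<bar>h x\<bar>)"
      by (rule integral_mult_right_zero)
    also have "\<dots> \<le> (Vf f (xs (Suc i)) - Vf f (xs i)) * W"
      using Lint[of i] V_mono[OF xsnn[of i] xsle[of i] xs1[of "Suc i"]] i unfolding A_def
      by (intro mult_left_mono) auto
    finally show ?thesis unfolding eqE .
  qed
  have lhs: "(\<Sum>k<n. e a k * coef \<phi> f (Suc k)) = G2 1"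
  proof -
    have "(\<Sum>k<n. e a k * coef \<phi> f (Suc k)) = (\<Sum>k<n. integral\<^sup>L lborel (\<lambda>x. e a k * (fI x * \<psi> k x)))"
      by (simp add: coef_eq)
    also have "\<dots> = integral\<^sup>L lborel (\<lambda>x. \<Sum>k<n. e a k * (fI x * \<psi> k x))"
      by (rule Bochner_Integration.integral_sum[symmetric]) (intro integrable_mult_right fI_psi_int)
    also have "\<dots> = integral\<^sup>L lborel (\<lambda>x. indicator {0..1} x * (fI x * h x))"
      unfolding h_def O.S_def fI_def
      by (intro Bochner_Integration.integral_cong refl) (auto simp: sum_distrib_left atLeast0LessThan mult_ac split: split_indicator)
    finally show ?thesis unfolding G2_def .
  qed
  have G20: "G2 0 = 0" unfolding G2_def using int_zero by simp
  have G10: "G1 0 = 0" unfolding G1_def using int_zero by simp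
  have tel: "G2 1 = (\<Sum>i<n. G2 (xs (Suc i)) - G2 (xs i))"
    using sum_lessThan_telescope[of "\<lambda>i. G2 (xs i)" n] xsn xs0 G20 by simp
  define E where "E i = G2 (xs (Suc i)) - G2 (xs i) - f (xs (Suc i)) * (G1 (xs (Suc i)) - G1 (xs i))" for i
  have G2split: "G2 1 = (\<Sum>i<n. f (xs (Suc i)) * (G1 (xs (Suc i)) - G1 (xs i))) + (\<Sum>i<n. E i)"
    unfolding tel E_def by (simp add: sum.distrib[symmetric])
  have Vtel: "(\<Sum>i<n. Vf f (xs (Suc i)) - Vf f (xs i)) \<le> Mv"
  proof -
    have "(\<Sum>i<n. Vf f (xs (Suc i)) - Vf f (xs i)) = Vf f 1 - Vf f 0"
      using sum_lessThan_telescope[of "\<lambda>i. Vf f (xs i)" n] xsn xs0 by simp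
    then show ?thesis using V_le[of 1] V0 by simp
  qed
  have dV0: "0 \<le> Vf f (xs (Suc i)) - Vf f (xs i)" if "i < n" for i
    using V_mono[OF xsnn[of i] xsle[of i] xs1[of "Suc i"]] that by auto
  have sumE: "\<bar>\<Sum>i<n. E i\<bar> \<le> Mv * W"
  proof -
    have "\<bar>\<Sum>i<n. E i\<bar> \<le> (\<Sum>i<n. \<bar>E i\<bar>)" by (rule sum_abs)
    also have "\<dots> \<le> (\<Sum>i<n. (Vf f (xs (Suc i)) - Vf f (xs i)) * W)"
      unfolding E_def by (intro sum_mono Ei) auto
    also have "\<dots> = (\<Sum>i<n. Vf f (xs (Suc i)) - Vf f (xs i)) * W" by (simp add: sum_distrib_right)
    also have "\<dots> \<le> Mv * W" using Vtel W0 by (intro mult_right_mono) auto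
    finally show ?thesis .
  qed
  define BB where "BB = Bn \<phi> n d a"
  have BB0: "0 \<le> BB" unfolding BB_def using Bn_nonneg[OF n] .
  have G1_LB: "G1 t = (LBINT x:{0..t}. Qn \<phi> n d a x)" if "t \<le> 1" for t
  proof -
    have "(\<lambda>x. indicator {0..t} x * h x) = (\<lambda>x. indicator {0..t} x *\<^sub>R Qn \<phi> n d a x)"
    proof (rule ext)
      fix x show "indicator {0..t} x * h x = indicator {0..t} x *\<^sub>R Qn \<phi> n d a x"
        using QI_eq[of x n a, symmetric] that unfolding h_def by (auto split: split_indicator)
    qed
    then show ?thesis unfolding G1_def set_lebesgue_integral_def by simp
  qed
  have vb: "\<bar>G1 (xs i)\<bar> \<le> BB" if "i < n" for i
  proof (cases "i = 0")
    case True then show ?thesis using G10 xs0 BB0 by simp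
  next
    case False
    then have "\<bar>G1 (xs i)\<bar> = \<bar>LBINT x:{0..real i / real n}. Qn \<phi> n d a x\<bar>"
      using G1_LB[of "xs i"] xs1[of i] that unfolding xs_def by auto
    also have "\<dots> \<le> BB" unfolding BB_def using False that by (intro Bn_ge) auto
    finally show ?thesis .
  qed
  have ab: "(\<Sum>i<n. f (xs (Suc i)) * (G1 (xs (Suc i)) - G1 (xs i))) =
        f 1 * G1 1 - (\<Sum>i<n. G1 (xs i) * (f (xs (Suc i)) - f (xs i)))"
    using abel[of "\<lambda>i. f (xs i)" "\<lambda>i. G1 (xs i)" n] xsn xs0 G10 by simp
  have sumA: "\<bar>\<Sum>i<n. G1 (xs i) * (f (xs (Suc i)) - f (xs i))\<bar> \<le> BB * Mv"
  proof -
    have "\<bar>\<Sum>i<n. G1 (xs i) * (f (xs (Suc i)) - f (xs i))\<bar> \<le> (\<Sum>i<n. \<bar>G1 (xs i) * (f (xs (Suc i)) - f (xs i))\<bar>)"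
      by (rule sum_abs)
    also have "\<dots> \<le> (\<Sum>i<n. BB * (Vf f (xs (Suc i)) - Vf f (xs i)))"
    proof (intro sum_mono)
      fix i assume i: "i \<in> {..<n}"
      have "\<bar>f (xs (Suc i)) - f (xs i)\<bar> \<le> Vf f (xs (Suc i)) - Vf f (xs i)"
        using V_step[OF xsnn[of i] xsle[of i] xs1[of "Suc i"]] i by auto
      then show "\<bar>G1 (xs i) * (f (xs (Suc i)) - f (xs i))\<bar> \<le> BB * (Vf f (xs (Suc i)) - Vf f (xs i))"
        unfolding abs_mult using vb[of i] i by (intro mult_mono) auto
    qed
    also have "\<dots> = BB * (\<Sum>i<n. Vf f (xs (Suc i)) - Vf f (xs i))" by (simp add: sum_distrib_left)
    also have "\<dots> \<le> BB * Mv" using Vtel BB0 by (intro mult_left_mono) auto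
    finally show ?thesis .
  qed
  have G11: "\<bar>G1 1\<bar> \<le> BB + W"
  proof -
    define m where "m = n - 1"
    have m: "Suc m = n" "m < n" unfolding m_def using n by auto
    have "G1 1 = G1 (xs m) + integral\<^sup>L lborel (\<lambda>x. indicator {xs m<..xs (Suc m)} x * h x)"
      unfolding G1_def using int_split[OF hint xsnn[of m] xsle[of m]] m xsn by simp
    moreover have "\<bar>integral\<^sup>L lborel (\<lambda>x. indicator {xs m<..xs (Suc m)} x * h x)\<bar> \<le> W"
    proof -
      have "\<bar>integral\<^sup>L lborel (\<lambda>x. indicator {xs m<..xs (Suc m)} x * h x)\<bar> \<le>
            integral\<^sup>L lborel (\<lambda>x. \<bar>indicator {xs m<..xs (Suc m)} x * h x\<bar>)"
        using integral_norm_bound[of lborel "\<lambda>x. indicator {xs m<..xs (Suc m)} x * h x"] by simp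
      also have "\<dots> = integral\<^sup>L lborel (\<lambda>x. indicator {xs m<..xs (Suc m)} x * \<bar>h x\<bar>)"
        by (simp add: abs_mult)
      also have "\<dots> \<le> W" by (rule Lint)
      finally show ?thesis .
    qed
    ultimately show ?thesis using vb[OF m(2)] by linarith
  qed
  have "\<bar>G2 1\<bar> \<le> \<bar>f 1\<bar> * \<bar>G1 1\<bar> + BB * Mv + Mv * W"
  proof -
    have "\<bar>G2 1\<bar> \<le> \<bar>f 1 * G1 1\<bar> + \<bar>\<Sum>i<n. G1 (xs i) * (f (xs (Suc i)) - f (xs i))\<bar> + \<bar>\<Sum>i<n. E i\<bar>"
      unfolding G2split ab by linarith
    then show ?thesis using sumA sumE unfolding abs_mult by linarith
  qed
  also have "\<dots> \<le> \<bar>f 1\<bar> * (BB + W) + BB * Mv + Mv * W"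
    using mult_left_mono[OF G11, of "\<bar>f 1\<bar>"] by simp
  finally show ?thesis unfolding lhs BB_def W_def by (simp add: algebra_simps)
qed

end

theorem corollary1:
  fixes \<phi> :: "nat \<Rightarrow> real \<Rightarrow> real" and d :: "nat \<Rightarrow> real" and f :: "real \<Rightarrow> real"
  assumes ons: "orthonormal_system \<phi>"
    and dO: "(\<lambda>n. d n) \<in> O(\<lambda>n. sqrt (real n) / (ln (real n + 1))\<^sup>2)"
    and B: "\<forall>a::nat \<Rightarrow> real. summable (\<lambda>n. (a n)\<^sup>2) \<longrightarrow>
              (\<lambda>n. Bn \<phi> n d a) \<in> O(\<lambda>n. 1)"
    and f: "BV01 f"
  shows "AE x in lborel. x \<in> {0..1} \<longrightarrow>
           summable (\<lambda>k. d (Suc k) * coef \<phi> f (Suc k) * \<phi> (Suc k) x)"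
proof -
  from BV_bound[OF f] obtain Mv where bnd: "\<And>x t m. x \<le> 1 \<Longrightarrow> partn x t m \<Longrightarrow> vsum f t m \<le> Mv"
    by blast
  interpret C: ctx f Mv \<phi> d
    by unfold_locales (use bnd ons in auto)
  have Mv0: "0 \<le> Mv" using C.V0 C.V_le[of 0] by auto
  obtain K where K0: "K > 0" and K: "\<And>k. (d k * ln (real k))\<^sup>2 \<le> K * real k"
    using d_bound[OF dO] by blast
  define b where "b k = d k * ln (real k) * coef \<phi> f k" for k
  have H: "\<exists>Kb. eventually (\<lambda>n. \<bar>\<Sum>k<n. a k * b k\<bar> \<le> Kb) sequentially"
    if a: "summable (\<lambda>n. (a n)\<^sup>2)" for a
  proof -
    have "(\<lambda>n. Bn \<phi> n d a) \<in> O(\<lambda>n. 1)" using B a by blast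
    then obtain cb where cb: "cb > 0" and evb: "eventually (\<lambda>n. norm (Bn \<phi> n d a) \<le> cb * norm (1::real)) sequentially"
      by (elim landau_o.bigE)
    then obtain N where N: "\<And>n. n \<ge> N \<Longrightarrow> \<bar>Bn \<phi> n d a\<bar> \<le> cb" unfolding eventually_sequentially by auto
    have a': "summable (\<lambda>k. (a (Suc k))\<^sup>2)" using a by (subst summable_Suc_iff)
    define A where "A = (\<Sum>k. (a (Suc k))\<^sup>2)"
    have A0: "0 \<le> A" unfolding A_def using a' by (intro suminf_nonneg) auto
    define Kb where "Kb = Mv * (K * A / 2 + 1/2) + \<bar>f 1\<bar> * (cb + K * A / 2 + 1/2) + cb * Mv"
    have "\<bar>\<Sum>k<n'. a k * b k\<bar> \<le> Kb" if n': "n' \<ge> Suc (max N 2)" for n'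
    proof -
      obtain n where n'n: "n' = Suc n" and n: "n \<ge> max N 2" using n' by (cases n') auto
      have "(\<Sum>k<n'. a k * b k) = (\<Sum>k<n. a (Suc k) * b (Suc k))"
        unfolding n'n sum.lessThan_Suc_shift by (simp add: b_def)
      also have "\<dots> = (\<Sum>k<n. C.e a k * coef \<phi> f (Suc k))"
        unfolding C.e_def b_def by (simp add: mult_ac)
      finally have eq: "(\<Sum>k<n'. a k * b k) = (\<Sum>k<n. C.e a k * coef \<phi> f (Suc k))" .
      define q where "q = (\<Sum>k<n. (C.e a k)\<^sup>2)"
      have "q \<le> (\<Sum>k<n. K * real n * (a (Suc k))\<^sup>2)" unfolding q_def
      proof (intro sum_mono)
        fix k assume k: "k \<in> {..<n}"
        have "(C.e a k)\<^sup>2 = (d (Suc k) * ln (real (Suc k)))\<^sup>2 * (a (Suc k))\<^sup>2"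
          unfolding C.e_def by (simp add: power_mult_distrib mult_ac)
        also have "\<dots> \<le> (K * real (Suc k)) * (a (Suc k))\<^sup>2" by (intro mult_right_mono K) auto
        also have "\<dots> \<le> (K * real n) * (a (Suc k))\<^sup>2"
          using k K0 by (intro mult_right_mono mult_left_mono) auto
        finally show "(C.e a k)\<^sup>2 \<le> K * real n * (a (Suc k))\<^sup>2" .
      qed
      also have "\<dots> = K * real n * (\<Sum>k<n. (a (Suc k))\<^sup>2)" by (simp add: sum_distrib_left)
      also have "\<dots> \<le> K * real n * A"
        unfolding A_def using K0 by (intro mult_left_mono sum_le_suminf[OF a']) auto
      finally have qb: "q \<le> K * real n * A" .
      have npos: "0 < real n" using n by auto
      have qn: "q / (2 * real n) \<le> K * A / 2"
        using qb npos by (simp add: divide_simps mult_ac)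
      have bn0: "0 \<le> Bn \<phi> n d a" using C.Bn_nonneg n by auto
      have bnc: "Bn \<phi> n d a \<le> cb" using N[of n] n by auto
      have "\<bar>\<Sum>k<n'. a k * b k\<bar> \<le> Mv * (q / (2 * real n) + 1/2) + \<bar>f 1\<bar> * (Bn \<phi> n d a + q / (2 * real n) + 1/2) + Bn \<phi> n d a * Mv"
        unfolding eq q_def using C.main_bound[of n a] n by auto
      also have "\<dots> \<le> Kb" unfolding Kb_def
        using qn bnc Mv0 by (intro add_mono mult_left_mono mult_right_mono) auto
      finally show ?thesis .
    qed
    then show ?thesis unfolding eventually_sequentially by blast
  qed
  have sb: "summable (\<lambda>n. (b n)\<^sup>2)" by (rule landau_l2[OF H])
  define c where "c k = d (Suc k) * coef \<phi> f (Suc k)" for k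
  have "summable (\<lambda>k. (b (Suc k))\<^sup>2)" using sb by (subst summable_Suc_iff)
  moreover have "(b (Suc k))\<^sup>2 = (c k)\<^sup>2 * (ln (real k + 1))\<^sup>2" for k
    unfolding b_def c_def by (simp add: power_mult_distrib mult_ac add.commute)
  ultimately have "summable (\<lambda>k. (c k)\<^sup>2 * (ln (real k + 1))\<^sup>2)" by simp
  then have "AE x in lborel. summable (\<lambda>k. c k * C.\<psi> k x)" by (rule C.O.RM_ae)
  then show ?thesis
  proof (rule eventually_mono)
    fix x assume s: "summable (\<lambda>k. c k * C.\<psi> k x)"
    show "x \<in> {0..1} \<longrightarrow> summable (\<lambda>k. d (Suc k) * coef \<phi> f (Suc k) * \<phi> (Suc k) x)"
    proof
      assume "x \<in> {0..1}"
      then have "c k * C.\<psi> k x = d (Suc k) * coef \<phi> f (Suc k) * \<phi> (Suc k) x" for k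
        unfolding c_def C.\<psi>_def by simp
      then show "summable (\<lambda>k. d (Suc k) * coef \<phi> f (Suc k) * \<phi> (Suc k) x)" using s by simp
    qed
  qed
qed


end
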